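(* Let $G$ be a finite game that is $(\lambda,\mu)$-smooth with $\mu>0$ (with respect to a fixed welfare maximizer $a^*$). Then every sink equilibrium $\sigma$ of the better-response process of $G$ has a joint action $\tilde a$ in its support with $W(\tilde a)\ge\frac{\lambda}{\mu}W(a^* )$.
   Context: A finite game $G$ consists of agents $N=\{1,\dots,n\}$, finite nonempty action sets $\mathcal A_i$, joint action set $\mathcal A=\mathcal A_1\times\cdots\times\mathcal A_n$, a welfare function $W:\mathcal A\to\mathbb R_{\ge 0}$ and utility functions $U_i:\mathcal A\to\mathbb R$, $i\in N$. For $a\in\mathcal A$, $a_{-i}$ denotes the actions of all agents other than $i$, and $(b_i,a_{-i})$ is the joint action obtained from $a$ by replacing $a_i$ with $b_i$. Fix $a^*\in\arg\max_{a\in\mathcal A}W(a)$. For $\mu\ge\lambda\ge0$, $G$ is $(\lambda,\mu)$-smooth if $\sum_{i=1}^n\big(U_i(a)-U_i(a^*_i,a_{-i})\big)\le\mu W(a)-\lambda W(a^* )$ for all $a\in\mathcal A$. The better response set of agent $i$ at $a$ is $\mathrm{br}_i(a)=\{b_i\in\mathcal A_i: U_i(b_i,a_{-i})\ge U_i(a)\}$. The better-response process is the Markov chain on $\mathcal A$ in which, from state $a$, an agent $i$ is chosen uniformly at random from $N$, then $b_i$ is chosen uniformly at random from $\mathrm{br}_i(a)$, and the next state is $(b_i,a_{-i})$. A sink strongly connected component of this chain is a nonempty set $S\subseteq\mathcal A$ such that for all $a,\bar a\in S$ there is a positive-probability path from $a$ to $\bar a$, and no state outside $S$ is reachable with positive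 probability from $S$. A sink equilibrium of the better-response process is a stationary distribution of this chain whose support equals a sink strongly connected component. *)

theory Defs
  imports Complex_Main "HOL-Library.FuncSet"
begin

definition joint :: "nat \<Rightarrow> (nat \<Rightarrow> 'a set) \<Rightarrow> (nat \<Rightarrow> 'a) set" where
  "joint n A = PiE {1..n} A"

definition finite_game :: "nat \<Rightarrow> (nat \<Rightarrow> 'a set) \<Rightarrow> ((nat \<Rightarrow> 'a) \<Rightarrow> real) \<Rightarrow> bool" where
  "finite_game n A W \<longleftrightarrow> n \<ge> 1 \<and> (\<forall>i\<in>{1..n}. finite (A i) \<and> A i \<noteq> {})
     \<and> (\<forall>a\<in>joint n A. W a \<ge> 0)"

definition is_welfare_max ::
  "nat \<Rightarrow> (nat \<Rightarrow> 'a set) \<Rightarrow> ((nat \<Rightarrow> 'a) \<Rightarrow> real) \<Rightarrow> (nat \<Rightarrow> 'a) \<Rightarrow> bool" where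
  "is_welfare_max n A W astar \<longleftrightarrow> astar \<in> joint n A \<and> (\<forall>a\<in>joint n A. W a \<le> W astar)"

definition smooth ::
  "nat \<Rightarrow> (nat \<Rightarrow> 'a set) \<Rightarrow> ((nat \<Rightarrow> 'a) \<Rightarrow> real) \<Rightarrow> (nat \<Rightarrow> (nat \<Rightarrow> 'a) \<Rightarrow> real)
   \<Rightarrow> (nat \<Rightarrow> 'a) \<Rightarrow> real \<Rightarrow> real \<Rightarrow> bool" where
  "smooth n A W U astar lam mu \<longleftrightarrow> mu \<ge> lam \<and> lam \<ge> 0 \<and>
     (\<forall>a\<in>joint n A. (\<Sum>i=1..n. U i a - U i (a(i := astar i))) \<le> mu * W a - lam * W astar)"

definition br :: "(nat \<Rightarrow> 'a set) \<Rightarrow> (nat \<Rightarrow> (nat \<Rightarrow> 'a) \<Rightarrow> real) \<Rightarrow> nat \<Rightarrow> (nat \<Rightarrow> 'a) \<Rightarrow> 'a set" where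
  "br A U i a = {b \<in> A i. U i (a(i := b)) \<ge> U i a}"

definition br_trans ::
  "nat \<Rightarrow> (nat \<Rightarrow> 'a set) \<Rightarrow> (nat \<Rightarrow> (nat \<Rightarrow> 'a) \<Rightarrow> real) \<Rightarrow> (nat \<Rightarrow> 'a) \<Rightarrow> (nat \<Rightarrow> 'a) \<Rightarrow> real" where
  "br_trans n A U a a' =
     (\<Sum>i\<in>{1..n}. (1 / real n) *
        (real (card {b \<in> br A U i a. a(i := b) = a'}) / real (card (br A U i a))))"

definition br_edges :: "nat \<Rightarrow> (nat \<Rightarrow> 'a set) \<Rightarrow> (nat \<Rightarrow> (nat \<Rightarrow> 'a) \<Rightarrow> real) \<Rightarrow> ((nat \<Rightarrow> 'a) \<times> (nat \<Rightarrow> 'a)) set" where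
  "br_edges n A U = {(a, b). a \<in> joint n A \<and> b \<in> joint n A \<and> br_trans n A U a b > 0}"

definition sink_scc ::
  "nat \<Rightarrow> (nat \<Rightarrow> 'a set) \<Rightarrow> (nat \<Rightarrow> (nat \<Rightarrow> 'a) \<Rightarrow> real) \<Rightarrow> (nat \<Rightarrow> 'a) set \<Rightarrow> bool" where
  "sink_scc n A U S \<longleftrightarrow> S \<noteq> {} \<and> S \<subseteq> joint n A
     \<and> (\<forall>a\<in>S. \<forall>b\<in>S. (a, b) \<in> (br_edges n A U)\<^sup>*)
     \<and> (\<forall>a\<in>S. \<forall>b\<in>joint n A. br_trans n A U a b > 0 \<longrightarrow> b \<in> S)"

definition stationary ::
  "nat \<Rightarrow> (nat \<Rightarrow> 'a set) \<Rightarrow> (nat \<Rightarrow> (nat \<Rightarrow> 'a) \<Rightarrow> real) \<Rightarrow> ((nat \<Rightarrow> 'a) \<Rightarrow> real) \<Rightarrow> bool" where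
  "stationary n A U \<sigma> \<longleftrightarrow> (\<forall>a. \<sigma> a \<ge> 0) \<and> (\<forall>a. a \<notin> joint n A \<longrightarrow> \<sigma> a = 0)
     \<and> (\<Sum>a\<in>joint n A. \<sigma> a) = 1
     \<and> (\<forall>a'\<in>joint n A. (\<Sum>a\<in>joint n A. \<sigma> a * br_trans n A U a a') = \<sigma> a')"

definition sink_equilibrium ::
  "nat \<Rightarrow> (nat \<Rightarrow> 'a set) \<Rightarrow> (nat \<Rightarrow> (nat \<Rightarrow> 'a) \<Rightarrow> real) \<Rightarrow> ((nat \<Rightarrow> 'a) \<Rightarrow> real) \<Rightarrow> bool" where
  "sink_equilibrium n A U \<sigma> \<longleftrightarrow> stationary n A U \<sigma> \<and> sink_scc n A U {a \<in> joint n A. \<sigma> a > 0}"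

end

theory Submission
  imports Defs
begin

lemma br_trans_pos:
  assumes fg: "finite_game n A W" and a: "a \<in> joint n A" and i: "i \<in> {1..n}"
    and b: "b \<in> br A U i a"
  shows "br_trans n A U a (a(i := b)) > 0"
proof -
  have fin: "\<And>j. j \<in> {1..n} \<Longrightarrow> finite (br A U j a)"
    using fg unfolding finite_game_def br_def by auto
  have nonneg: "\<And>j. j \<in> {1..n} \<Longrightarrow> 0 \<le> (1 / real n) *
        (real (card {c \<in> br A U j a. a(j := c) = a(i := b)}) / real (card (br A U j a)))"
    by simp
  have n: "n \<ge> 1" using i by auto
  have "card {c \<in> br A U i a. a(i := c) = a(i := b)} > 0"
    using fin[OF i] b by (subst card_gt_0_iff) auto
  moreover have "card (br A U i a) > 0" using fin[OF i] b by (subst card_gt_0_iff) auto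
  ultimately have pos: "0 < (1 / real n) *
        (real (card {c \<in> br A U i a. a(i := c) = a(i := b)}) / real (card (br A U i a)))"
    using n by simp
  have "(1 / real n) *
        (real (card {c \<in> br A U i a. a(i := c) = a(i := b)}) / real (card (br A U i a)))
      \<le> (\<Sum>j\<in>{1..n}. (1 / real n) *
        (real (card {c \<in> br A U j a. a(j := c) = a(i := b)}) / real (card (br A U j a))))"
    by (rule member_le_sum[OF i nonneg]) auto
  with pos show ?thesis unfolding br_trans_def by linarith
qed

theorem proposition4:
  fixes n :: nat and A :: "nat \<Rightarrow> 'a set" and W :: "(nat \<Rightarrow> 'a) \<Rightarrow> real"
    and U :: "nat \<Rightarrow> (nat \<Rightarrow> 'a) \<Rightarrow> real" and astar :: "nat \<Rightarrow> 'a"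
    and lam mu :: real and \<sigma> :: "(nat \<Rightarrow> 'a) \<Rightarrow> real"
  assumes fg: "finite_game n A W"
    and wm: "is_welfare_max n A W astar"
    and sm: "smooth n A W U astar lam mu"
    and mu: "mu > 0"
    and se: "sink_equilibrium n A U \<sigma>"
  shows "\<exists>a \<in> joint n A. \<sigma> a > 0 \<and> W a \<ge> lam / mu * W astar"
proof -
  define S where "S = {a \<in> joint n A. \<sigma> a > 0}"
  have scc: "sink_scc n A U S" using se unfolding sink_equilibrium_def S_def by simp
  have finJ: "finite (joint n A)" using fg unfolding finite_game_def joint_def
    by (intro finite_PiE) auto
  have finS: "finite S" using finJ unfolding S_def by simp
  have neS: "S \<noteq> {}" using scc unfolding sink_scc_def by simp
  define f where "f a = card {i\<in>{1..n}. a i = astar i}" for a :: "nat \<Rightarrow> 'a"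
  obtain a where aS: "a \<in> S" and amax: "\<forall>b\<in>S. f b \<le> f a"
  proof -
    have "Max (f ` S) \<in> f ` S" using finS neS by simp
    then obtain a where "a \<in> S" "f a = Max (f ` S)" by auto
    moreover have "\<forall>b\<in>S. f b \<le> Max (f ` S)" using finS by simp
    ultimately show ?thesis using that by auto
  qed
  have aJ: "a \<in> joint n A" using aS unfolding S_def by simp
  have astJ: "astar \<in> joint n A" using wm unfolding is_welfare_max_def by simp
  have key: "\<And>i. i \<in> {1..n} \<Longrightarrow> U i a - U i (a(i := astar i)) \<ge> 0"
  proof -
    fix i assume i: "i \<in> {1..n}"
    show "U i a - U i (a(i := astar i)) \<ge> 0"
    proof (cases "a i = astar i")
      case True
      then have "a(i := astar i) = a" by auto
      then show ?thesis by simp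
    next
      case False
      show ?thesis
      proof (rule ccontr)
        assume "\<not> ?thesis"
        then have "astar i \<in> br A U i a"
          using astJ i unfolding br_def joint_def by (auto simp: PiE_iff)
        from br_trans_pos[OF fg aJ i this] have pos: "br_trans n A U a (a(i := astar i)) > 0" .
        have bJ: "a(i := astar i) \<in> joint n A"
          using aJ astJ i unfolding joint_def by (auto simp: PiE_iff extensional_def)
        have bS: "a(i := astar i) \<in> S"
          using scc aS bJ pos unfolding sink_scc_def by blast
        have sub: "{j\<in>{1..n}. a j = astar j} \<subset> {j\<in>{1..n}. (a(i := astar i)) j = astar j}"
          using i False by auto
        have "f a < f (a(i := astar i))" unfolding f_def
          by (rule psubset_card_mono[OF _ sub]) simp
        with amax bS show False by fastforce
      qed
    qed
  qed
  have "0 \<le> (\<Sum>i=1..n. U i a - U i (a(i := astar i)))"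
    using key by (intro sum_nonneg) auto
  also have "\<dots> \<le> mu * W a - lam * W astar" using sm aJ unfolding smooth_def by blast
  finally have "lam * W astar \<le> mu * W a" by simp
  then have "lam / mu * W astar \<le> W a" using mu
    by (simp add: field_simps)
  then show ?thesis using aS unfolding S_def by blast
qed

end
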